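(* Let $\Gamma$ be a graph, $c$ a vertex of $\Gamma$, and $w>0$ an integer. Suppose that for every integer $r\ge0$: (1) for every $z\in S_r(c)$ and every $x,y\in S_{r+1}(c)$ with $d(x,z)\le1$, $d(y,z)\le 1$, there is a path $x=x_0,x_1,\dots,x_\ell=y$ with $x_i\in S_{r+1}\cup\dots\cup S_{r+w}$ for all $0\le i\le \ell$; (2) for every adjacent pair $x,y\in S_r(c)$ there is a path $x=x_0,x_1,\dots,x_\ell=y$ with $x_i\in S_{r+1}\cup\dots\cup S_{r+w}$ for all $0<i<\ell$. Then for every $r\ge 0$ the union $S_r\cup\dots\cup S_{r+w-1}$ is connected.
   Context: For a graph $\Gamma$ with graph metric $d$ and a fixed vertex $c$, $S_r=S_r(c)$ is the set of vertices at distance exactly $r$ from $c$. A path is a sequence of vertices each adjacent to the next (no bound on the length $\ell$ is assumed). A set of vertices is connected if its induced subgraph is connected. *)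

theory Defs
  imports Main "HOL-Library.Extended_Nat"
begin

definition graph :: "'a set \<Rightarrow> ('a \<Rightarrow> 'a \<Rightarrow> bool) \<Rightarrow> bool" where
  "graph V E \<longleftrightarrow> (\<forall>x y. E x y \<longrightarrow> x \<in> V \<and> y \<in> V \<and> E y x \<and> x \<noteq> y)"

definition is_path :: "('a \<Rightarrow> 'a \<Rightarrow> bool) \<Rightarrow> 'a list \<Rightarrow> bool" where
  "is_path E xs \<longleftrightarrow> xs \<noteq> [] \<and> (\<forall>i. Suc i < length xs \<longrightarrow> E (xs ! i) (xs ! Suc i))"

text \<open>Graph metric (infinite if no path exists): length of a shortest path.\<close>

definition gdist :: "'a set \<Rightarrow> ('a \<Rightarrow> 'a \<Rightarrow> bool) \<Rightarrow> 'a \<Rightarrow> 'a \<Rightarrow> enat" where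
  "gdist V E u v = (INF xs \<in> {xs. is_path E xs \<and> set xs \<subseteq> V \<and> hd xs = u \<and> last xs = v}.
                      enat (length xs - 1))"

definition sphere :: "'a set \<Rightarrow> ('a \<Rightarrow> 'a \<Rightarrow> bool) \<Rightarrow> 'a \<Rightarrow> nat \<Rightarrow> 'a set" where
  "sphere V E c r = {v \<in> V. gdist V E c v = enat r}"

definition connected_set :: "('a \<Rightarrow> 'a \<Rightarrow> bool) \<Rightarrow> 'a set \<Rightarrow> bool" where
  "connected_set E A \<longleftrightarrow>
     (\<forall>x\<in>A. \<forall>y\<in>A. \<exists>xs. is_path E xs \<and> hd xs = x \<and> last xs = y \<and> set xs \<subseteq> A)"

end

theory Submission
  imports Defs
begin

lemma gdist_le:
  assumes "is_path E xs" "set xs \<subseteq> V" "hd xs = u" "last xs = v"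
  shows "gdist V E u v \<le> enat (length xs - 1)"
  unfolding gdist_def using assms by (intro INF_lower) auto

lemma gdist_obtain:
  assumes "gdist V E u v = enat k"
  shows "\<exists>xs. is_path E xs \<and> set xs \<subseteq> V \<and> hd xs = u \<and> last xs = v \<and> length xs = Suc k"
proof -
  let ?P = "{xs. is_path E xs \<and> set xs \<subseteq> V \<and> hd xs = u \<and> last xs = v}"
  let ?f = "\<lambda>xs. enat (length xs - 1)"
  have "?f ` ?P \<noteq> {}"
  proof
    assume "?f ` ?P = {}"
    then have "?P = {}" by blast
    then have "gdist V E u v = \<infinity>" unfolding gdist_def by (simp only: image_empty Inf_empty) (simp add: top_enat_def)
    with assms show False by simp
  qed
  then have "Inf (?f ` ?P) \<in> ?f ` ?P"
    unfolding Inf_enat_def by (auto intro: LeastI)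
  then obtain xs where xs: "xs \<in> ?P" "gdist V E u v = ?f xs"
    unfolding gdist_def by auto
  then have "xs \<noteq> []" by (simp add: is_path_def)
  with xs assms show ?thesis by (intro exI[of _ xs]) auto
qed

lemma is_path_snoc:
  assumes "is_path E xs" "E (last xs) v"
  shows "is_path E (xs @ [v])"
  using assms unfolding is_path_def
  apply (auto simp: nth_append last_conv_nth less_Suc_eq)
  subgoal for i by (subgoal_tac "length xs - Suc 0 = i") auto
  done

lemma is_path_take:
  assumes "is_path E xs" "n > 0"
  shows "is_path E (take n xs)"
  using assms unfolding is_path_def by auto

lemma gdist_tri:
  assumes G: "graph V E" and e: "E u v"
  shows "gdist V E c v \<le> gdist V E c u + 1"
proof (cases "gdist V E c u")
  case (enat k)
  from gdist_obtain[OF this] obtain xs where xs: "is_path E xs" "set xs \<subseteq> V" "hd xs = c"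
    "last xs = u" "length xs = Suc k" by blast
  have "v \<in> V" using G e by (auto simp: graph_def)
  have "gdist V E c v \<le> enat (length (xs @ [v]) - 1)"
    by (rule gdist_le) (use xs e \<open>v \<in> V\<close> is_path_snoc in \<open>auto simp: hd_append\<close>)
  then show ?thesis using xs enat by (simp add: one_enat_def)
qed simp

lemma gdist_adj:
  assumes G: "graph V E" and e: "E x y"
  shows "gdist V E x y \<le> 1"
proof -
  have "gdist V E x y \<le> enat (length [x,y] - 1)"
    by (rule gdist_le) (use G e in \<open>auto simp: is_path_def graph_def less_Suc_eq\<close>)
  then show ?thesis by (simp add: one_enat_def)
qed

lemma sphere_adj:
  assumes G: "graph V E" and u: "u \<in> sphere V E c k" and e: "E u v"
  shows "\<exists>j. v \<in> sphere V E c j \<and> k \<le> Suc j \<and> j \<le> Suc k"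
proof -
  have v: "v \<in> V" and e': "E v u" using G e by (auto simp: graph_def)
  have gu: "gdist V E c u = enat k" using u by (simp add: sphere_def)
  have "gdist V E c v \<le> enat (Suc k)" using gdist_tri[OF G e, of c] gu by (simp add: one_enat_def)
  then obtain j where j: "gdist V E c v = enat j" using enat_ile by blast
  with \<open>gdist V E c v \<le> enat (Suc k)\<close> have "j \<le> Suc k" by simp
  moreover have "k \<le> Suc j" using gdist_tri[OF G e', of c] gu j by (simp add: one_enat_def)
  ultimately show ?thesis using v j by (auto simp: sphere_def)
qed

lemma sphere_parent:
  assumes G: "graph V E" and v: "v \<in> sphere V E c (Suc k)"
  shows "\<exists>u \<in> sphere V E c k. E u v"
proof -
  from v have "gdist V E c v = enat (Suc k)" by (simp add: sphere_def)
  from gdist_obtain[OF this] obtain xs where xs: "is_path E xs" "set xs \<subseteq> V" "hd xs = c"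
    "last xs = v" "length xs = Suc (Suc k)" by blast
  define u where "u = xs ! k"
  have euv: "E u v" using xs unfolding u_def is_path_def by (auto simp: last_conv_nth)
  have uV: "u \<in> V" using xs unfolding u_def by auto
  have lt: "last (take (Suc k) xs) = xs ! k" using xs(5) by (simp add: take_Suc_conv_app_nth)
  have "gdist V E c u \<le> enat (length (take (Suc k) xs) - 1)"
    by (rule gdist_le) (use xs is_path_take[OF xs(1)] in \<open>auto simp: u_def lt dest: in_set_takeD\<close>)
  then have le: "gdist V E c u \<le> enat k" using xs by simp
  then obtain m where m: "gdist V E c u = enat m" using enat_ile by blast
  have "enat (Suc k) \<le> enat m + 1" using gdist_tri[OF G euv, of c] m \<open>gdist V E c v = enat (Suc k)\<close> by simp
  then have "m = k" using le m by (simp add: one_enat_def)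
  then show ?thesis using m uV euv by (auto simp: sphere_def)
qed

lemma sphere0:
  assumes "a \<in> sphere V E c 0" shows "a = c"
proof -
  from assms have "gdist V E c a = enat 0" by (simp add: sphere_def)
  from gdist_obtain[OF this] obtain xs where "hd xs = c" "last xs = a" "length xs = 1" by auto
  then show ?thesis by (cases xs) auto
qed

lemma sphere_uniq: "a \<in> sphere V E c k \<Longrightarrow> a \<in> sphere V E c j \<Longrightarrow> k = j"
  by (simp add: sphere_def)

definition rel :: "('a \<Rightarrow> 'a \<Rightarrow> bool) \<Rightarrow> 'a set \<Rightarrow> 'a \<Rightarrow> 'a \<Rightarrow> bool" where
  "rel E A u v \<longleftrightarrow> E u v \<and> u \<in> A \<and> v \<in> A"

lemma conn_mono: "A \<subseteq> B \<Longrightarrow> (rel E A)\<^sup>*\<^sup>* x y \<Longrightarrow> (rel E B)\<^sup>*\<^sup>* x y"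
  by (erule rtranclp_mono[THEN predicate2D, rotated]) (auto simp: rel_def)

lemma conn_sym:
  assumes G: "graph V E" shows "(rel E A)\<^sup>*\<^sup>* x y \<Longrightarrow> (rel E A)\<^sup>*\<^sup>* y x"
proof (induction rule: rtranclp_induct)
  case (step y z)
  then have "rel E A z y" using G by (auto simp: rel_def graph_def)
  then show ?case using step by (meson converse_rtranclp_into_rtranclp)
qed simp

lemma path_conn:
  "is_path E xs \<Longrightarrow> j < length xs \<Longrightarrow> i \<le> j \<Longrightarrow> (\<forall>k. i \<le> k \<and> k \<le> j \<longrightarrow> xs!k \<in> A)
    \<Longrightarrow> (rel E A)\<^sup>*\<^sup>* (xs!i) (xs!j)"
proof (induction j)
  case (Suc j)
  show ?case
  proof (cases "i = Suc j")
    case False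
    then have "(rel E A)\<^sup>*\<^sup>* (xs!i) (xs!j)" using Suc by auto
    moreover have "rel E A (xs!j) (xs!Suc j)" using Suc False by (auto simp: rel_def is_path_def)
    ultimately show ?thesis by auto
  qed simp
qed simp

lemma conn_path:
  "(rel E A)\<^sup>*\<^sup>* x y \<Longrightarrow> y \<in> A \<Longrightarrow> \<exists>xs. is_path E xs \<and> hd xs = x \<and> last xs = y \<and> set xs \<subseteq> A"
proof (induction rule: converse_rtranclp_induct)
  case base
  then show ?case by (intro exI[of _ "[y]"]) (auto simp: is_path_def)
next
  case (step x x')
  then obtain xs where xs: "is_path E xs" "hd xs = x'" "last xs = y" "set xs \<subseteq> A" by auto
  then have "is_path E (x # xs)" using step(1) unfolding is_path_def rel_def
    by (auto simp: nth_Cons hd_conv_nth split: nat.splits)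
  then show ?case using xs step(1) by (intro exI[of _ "x # xs"]) (auto simp: rel_def is_path_def)
qed

lemma descend:
  assumes G: "graph V E"
  shows "v \<in> sphere V E c k \<Longrightarrow> R \<le> k \<Longrightarrow> (\<Union>j\<in>{R..k}. sphere V E c j) \<subseteq> A
    \<Longrightarrow> \<exists>u \<in> sphere V E c R. (rel E A)\<^sup>*\<^sup>* v u"
proof (induction k arbitrary: v)
  case 0
  then show ?case by auto
next
  case (Suc k)
  show ?case
  proof (cases "R = Suc k")
    case True
    then show ?thesis using Suc by auto
  next
    case False
    then have Rk: "R \<le> k" using Suc by auto
    obtain p where p: "p \<in> sphere V E c k" "E p v" using sphere_parent[OF G Suc.prems(1)] by blast
    have sub: "(\<Union>j\<in>{R..k}. sphere V E c j) \<subseteq> A" by (intro subset_trans[OF _ Suc.prems(3)] UN_mono) auto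
    have "rel E A v p" using p Suc.prems Rk G unfolding rel_def graph_def by fastforce
    moreover obtain u where "u \<in> sphere V E c R" "(rel E A)\<^sup>*\<^sup>* p u" using Suc.IH[OF p(1) Rk sub] by blast
    ultimately show ?thesis by (meson converse_rtranclp_into_rtranclp)
  qed
qed

theorem lemma2p1:
  fixes V :: "'a set" and E :: "'a \<Rightarrow> 'a \<Rightarrow> bool" and c :: 'a and w :: nat
  assumes G: "graph V E"
    and c: "c \<in> V"
    and w: "w > 0"
    and cond1: "\<And>r z x y. z \<in> sphere V E c r \<Longrightarrow> x \<in> sphere V E c (r + 1) \<Longrightarrow>
                  y \<in> sphere V E c (r + 1) \<Longrightarrow> gdist V E x z \<le> 1 \<Longrightarrow> gdist V E y z \<le> 1 \<Longrightarrow>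
                  \<exists>xs. is_path E xs \<and> hd xs = x \<and> last xs = y \<and>
                       (\<forall>i < length xs. xs ! i \<in> (\<Union>k\<in>{r+1..r+w}. sphere V E c k))"
    and cond2: "\<And>r x y. x \<in> sphere V E c r \<Longrightarrow> y \<in> sphere V E c r \<Longrightarrow> E x y \<Longrightarrow>
                  \<exists>xs. is_path E xs \<and> hd xs = x \<and> last xs = y \<and> 3 \<le> length xs \<and>
                       (\<forall>i. 0 < i \<and> i < length xs - 1 \<longrightarrow>
                             xs ! i \<in> (\<Union>k\<in>{r+1..r+w}. sphere V E c k))"
  shows "\<forall>r. connected_set E (\<Union>k\<in>{r..r+w-1}. sphere V E c k)"
proof -
  define S where "S = sphere V E c"
  define U where "U R = (\<Union>k\<in>{R..R+w-1}. S k)" for R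
  have US: "U (Suc R) = (\<Union>k\<in>{R+1..R+w}. S k)" for R
    unfolding U_def using w by (simp add: Suc_diff_1)
  have inU: "x \<in> U R \<longleftrightarrow> (\<exists>k. x \<in> S k \<and> R \<le> k \<and> k \<le> R + w - 1)" for x R
    unfolding U_def by auto
  have sib: "(rel E (U (Suc R)))\<^sup>*\<^sup>* x y"
    if h: "z \<in> S R" "x \<in> S (Suc R)" "y \<in> S (Suc R)" "E z x" "E z y" for z x y R
  proof -
    have "gdist V E x z \<le> 1" "gdist V E y z \<le> 1"
      using h G by (auto intro!: gdist_adj simp: graph_def)
    then obtain xs where xs: "is_path E xs" "hd xs = x" "last xs = y"
      "\<forall>i < length xs. xs ! i \<in> (\<Union>k\<in>{R+1..R+w}. sphere V E c k)"
      using cond1[of z R x y] h(1-3) unfolding S_def by auto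
    note U4 = xs(4)[folded S_def, folded US]
    have ne: "xs \<noteq> []" using xs(1) by (simp add: is_path_def)
    have "(rel E (U (Suc R)))\<^sup>*\<^sup>* (xs!0) (xs!(length xs - 1))"
    proof (rule path_conn)
      show "\<forall>k. 0 \<le> k \<and> k \<le> length xs - 1 \<longrightarrow> xs ! k \<in> U (Suc R)"
      proof (intro allI impI)
        fix k assume "0 \<le> k \<and> k \<le> length xs - 1"
        then have "k < length xs" using ne by (cases xs) auto
        then show "xs ! k \<in> U (Suc R)" using U4 by auto
      qed
    qed (use xs ne in auto)
    then show ?thesis using xs ne by (simp add: hd_conv_nth last_conv_nth)
  qed
  have adjS: "\<exists>j. v \<in> S j \<and> k \<le> Suc j \<and> j \<le> Suc k" if "u \<in> S k" "E u v" for u v k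
    using sphere_adj[OF G] that unfolding S_def by blast
  have uniq: "k = j" if "a \<in> S k" "a \<in> S j" for a k j
    using that unfolding S_def by (simp add: sphere_def)
  have UUp: "x \<in> U (Suc R)" if h: "x \<in> U R" "x \<notin> S R" for x R
  proof -
    obtain k where k: "x \<in> S k" "R \<le> k" "k \<le> R + w - 1" using h(1) inU by auto
    have "k \<noteq> R" using k(1) h(2) by auto
    then have "Suc R \<le> k" "k \<le> Suc R + w - 1" using k w by auto
    then show ?thesis using k(1) inU by blast
  qed
  have child2: "x \<in> S (Suc R)" if h: "x \<in> S k" "Suc R \<le> k" "E x y" "y \<in> S R" for x y R k
  proof -
    obtain j where j: "y \<in> S j" "k \<le> Suc j" using adjS[OF h(1) h(3)] by auto
    have "j = R" using uniq j(1) h(4) by auto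
    then have "k = Suc R" using j h(2) by simp
    then show ?thesis using h(1) by simp
  qed
  have child: "x \<in> S (Suc R)" if h: "x \<in> U R" "x \<notin> S R" "E x y" "y \<in> S R" for x y R
  proof -
    obtain k where k: "x \<in> S k" "R \<le> k" using h inU by auto
    have "k \<noteq> R" using k(1) h(2) by auto
    then show ?thesis using child2[OF k(1) _ h(3,4)] k(2) by simp
  qed
  have child3: "x \<in> S (Suc R)" if h: "x \<in> U (Suc R)" "E x y" "y \<in> S R" for x y R
  proof -
    obtain k where k: "x \<in> S k" "Suc R \<le> k" using h inU by auto
    show ?thesis using child2[OF k h(2,3)] .
  qed
  have B: "(rel E (U R))\<^sup>*\<^sup>* a b" if "a \<in> S R" "b \<in> S R" for R a b
    using that
  proof (induction R arbitrary: a b)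
    case 0
    then show ?case using sphere0 unfolding S_def by (metis rtranclp.rtrancl_refl)
  next
    case (Suc R)
    obtain a' where a': "a' \<in> S R" "E a' a" using sphere_parent[OF G] Suc.prems unfolding S_def by blast
    obtain b' where b': "b' \<in> S R" "E b' b" using sphere_parent[OF G] Suc.prems unfolding S_def by blast
    let ?C = "(rel E (U (Suc R)))\<^sup>*\<^sup>*"
    define Q where "Q v \<longleftrightarrow> v \<in> U R \<and> (v \<in> S R \<longrightarrow> (\<exists>d. d \<in> S (Suc R) \<and> E v d \<and> ?C a d))
       \<and> (v \<notin> S R \<longrightarrow> ?C a v)" for v
    have "(rel E (U R))\<^sup>*\<^sup>* a' b'" using Suc a' b' by blast
    then have "Q b'"
    proof (induction rule: rtranclp_induct)
      case base
      then show ?case unfolding Q_def using a' Suc.prems inU w by auto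
    next
      case (step u v)
      have e: "E u v" and uU: "u \<in> U R" and vU: "v \<in> U R" using step(2) by (auto simp: rel_def)
      obtain ku where ku: "u \<in> S ku" "R \<le> ku" using uU inU by auto
      show ?case
      proof (cases "u \<in> S R")
        case uS: True
        from step(3) uS obtain d where d: "d \<in> S (Suc R)" "E u d" "?C a d" unfolding Q_def by blast
        show ?thesis
        proof (cases "v \<in> S R")
          case vS: True
          obtain xs where xs: "is_path E xs" "hd xs = u" "last xs = v" "3 \<le> length xs"
            "\<forall>i. 0 < i \<and> i < length xs - 1 \<longrightarrow> xs ! i \<in> (\<Union>k\<in>{R+1..R+w}. sphere V E c k)"
            using cond2[of u R v] uS vS e unfolding S_def by blast
          note X5 = xs(5)[folded S_def, folded US]
          define q1 where "q1 = xs ! 1"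
          define q2 where "q2 = xs ! (length xs - 2)"
          have eu: "E u q1" using xs unfolding q1_def is_path_def by (auto simp: hd_conv_nth)
          have ev: "E q2 v"
          proof -
            have n: "Suc (length xs - 2) = length xs - 1" "length xs - 1 < length xs" using xs(4) by auto
            have lt: "Suc (length xs - 2) < length xs" using xs(4) by auto
            have "E (xs ! (length xs - 2)) (xs ! Suc (length xs - 2))"
              using xs(1) lt unfolding is_path_def by blast
            moreover have "xs ! (length xs - 1) = v" using xs(3,4) last_conv_nth[of xs] by (cases xs) auto
            ultimately show ?thesis unfolding q2_def using n by simp
          qed
          have q1U: "q1 \<in> U (Suc R)" using X5 xs(4) unfolding q1_def by auto
          have q2U: "q2 \<in> U (Suc R)" using X5 xs(4) unfolding q2_def by auto
          have eu': "E q1 u" using eu G by (auto simp: graph_def)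
          have q1S: "q1 \<in> S (Suc R)" using child3[OF q1U eu' uS] .
          have q2S: "q2 \<in> S (Suc R)" using child3[OF q2U ev vS] .
          have "?C q1 q2" unfolding q1_def q2_def
            by (rule path_conn) (use xs(1,4) X5 in auto)
          moreover have "?C d q1" using sib[OF uS d(1) q1S d(2) eu] .
          ultimately have "?C a q2" using d(3) by auto
          moreover have "E v q2" using ev G by (auto simp: graph_def)
          ultimately show ?thesis unfolding Q_def using vU q2S vS by blast
        next
          case vS: False
          have vS1: "v \<in> S (Suc R)" using child[OF vU vS] e G uS by (auto simp: graph_def)
          have "?C d v" using sib[OF uS d(1) vS1 d(2) e] .
          then show ?thesis unfolding Q_def using vU vS d(3) by auto
        qed
      next
        case uS: False
        from step(3) uS have au: "?C a u" unfolding Q_def by blast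
        show ?thesis
        proof (cases "v \<in> S R")
          case vS: True
          have "u \<in> S (Suc R)" using child[OF uU uS e vS] .
          moreover have "E v u" using e G by (auto simp: graph_def)
          ultimately show ?thesis unfolding Q_def using vU au vS by blast
        next
          case vS: False
          have "rel E (U (Suc R)) u v" using UUp[OF uU uS] UUp[OF vU vS] e by (simp add: rel_def)
          then have "?C a v" using au by auto
          then show ?thesis unfolding Q_def using vU vS by auto
        qed
      qed
    qed
    then obtain d where d: "d \<in> S (Suc R)" "E b' d" "?C a d" using b' unfolding Q_def by blast
    have "?C d b" using sib[OF b'(1) d(1) Suc.prems(2) d(2) b'(2)] .
    then show ?case using d(3) by auto
  qed
  show ?thesis
  proof (intro allI, unfold connected_set_def, intro ballI)
    fix r x y assume x: "x \<in> (\<Union>k\<in>{r..r+w-1}. sphere V E c k)" and y: "y \<in> (\<Union>k\<in>{r..r+w-1}. sphere V E c k)"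
    then have xU: "x \<in> U r" and yU: "y \<in> U r" unfolding U_def S_def by auto
    obtain kx where kx: "x \<in> S kx" "r \<le> kx" "kx \<le> r + w - 1" using xU inU by auto
    obtain ky where ky: "y \<in> S ky" "r \<le> ky" "ky \<le> r + w - 1" using yU inU by auto
    obtain a where a: "a \<in> S r" "(rel E (U r))\<^sup>*\<^sup>* x a"
    proof -
      have "(\<Union>j\<in>{r..kx}. sphere V E c j) \<subseteq> (\<Union>k\<in>{r..r+w-1}. sphere V E c k)"
        using kx by (intro UN_mono) auto
      then show ?thesis using that descend[OF G, of x c kx r "U r"] kx unfolding S_def U_def by blast
    qed
    obtain b where b: "b \<in> S r" "(rel E (U r))\<^sup>*\<^sup>* y b"
    proof -
      have "(\<Union>j\<in>{r..ky}. sphere V E c j) \<subseteq> (\<Union>k\<in>{r..r+w-1}. sphere V E c k)"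
        using ky by (intro UN_mono) auto
      then show ?thesis using that descend[OF G, of y c ky r "U r"] ky unfolding S_def U_def by blast
    qed
    have "(rel E (U r))\<^sup>*\<^sup>* x y"
      using a(2) B[OF a(1) b(1)] conn_sym[OF G b(2)] by auto
    from conn_path[OF this yU] show "\<exists>xs. is_path E xs \<and> hd xs = x \<and> last xs = y \<and>
        set xs \<subseteq> (\<Union>k\<in>{r..r+w-1}. sphere V E c k)" unfolding U_def S_def by simp
  qed
qed

end
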